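(* Let $G$ be a red-blue colouring of $K_n$, let $u \in V(G)$, and let $A_1, \ldots, A_5$ be pairwise disjoint non-empty subsets of $V(G) \setminus \{u\}$ such that $(A_1, \ldots, A_5)$ is a pentagon blow-up in $G$. Suppose that $(A_1, \ldots, A_5)$ has no bad configuration with respect to $u$. Then $(A_i \cup \{u\}, A_{i+1}, \ldots, A_{i+4})$ is a pentagon blow-up in $G$ for some $i \in [5]$ (indices modulo 5).
   Context: A red-blue colouring of $K_n$ assigns red or blue to each edge of the complete graph on the $n$-vertex set $V(G)$. For pairwise disjoint non-empty sets $A_1,\dots,A_5 \subseteq V(G)$, $(A_1,\dots,A_5)$ is a pentagon blow-up if for every $i \in [5]$ all edges between $A_i$ and $A_{i+1}$ are red and all edges between $A_i$ and $A_{i+2}$ are blue (indices modulo 5). For $u \notin A_1\cup\dots\cup A_5$, a bad configuration in $(A_1,\dots,A_5)$ with respect to $u$ is either a set of three red neighbours of $u$, one from each of $A_i, A_{i+2}, A_{i+3}$ for some $i \in [5]$, or a set of three blue neighbours of $u$, one from each of $A_i, A_{i+1}, A_{i+2}$ for some $i \in [5]$. *)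

theory Defs
  imports Main
begin

datatype colour = Red | Blue

definition red_blue_colouring :: "'a set \<Rightarrow> ('a \<Rightarrow> 'a \<Rightarrow> colour) \<Rightarrow> bool" where
  "red_blue_colouring V c \<longleftrightarrow> finite V \<and> (\<forall>x\<in>V. \<forall>y\<in>V. c x y = c y x)"

text \<open>Parts are indexed by 0..4 (standing for 1..5), indices taken modulo 5.\<close>
definition pentagon_blowup :: "('a \<Rightarrow> 'a \<Rightarrow> colour) \<Rightarrow> (nat \<Rightarrow> 'a set) \<Rightarrow> bool" where
  "pentagon_blowup c A \<longleftrightarrow>
     (\<forall>i<5. A i \<noteq> {}) \<and>
     (\<forall>i<5. \<forall>j<5. i \<noteq> j \<longrightarrow> A i \<inter> A j = {}) \<and>
     (\<forall>i<5. \<forall>x\<in>A i. \<forall>y\<in>A ((i + 1) mod 5). c x y = Red) \<and>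
     (\<forall>i<5. \<forall>x\<in>A i. \<forall>y\<in>A ((i + 2) mod 5). c x y = Blue)"

definition has_bad_configuration :: "('a \<Rightarrow> 'a \<Rightarrow> colour) \<Rightarrow> (nat \<Rightarrow> 'a set) \<Rightarrow> 'a \<Rightarrow> bool" where
  "has_bad_configuration c A u \<longleftrightarrow>
     (\<exists>i<5. \<exists>x\<in>A i. \<exists>y\<in>A ((i + 2) mod 5). \<exists>z\<in>A ((i + 3) mod 5).
        c u x = Red \<and> c u y = Red \<and> c u z = Red) \<or>
     (\<exists>i<5. \<exists>x\<in>A i. \<exists>y\<in>A ((i + 1) mod 5). \<exists>z\<in>A ((i + 2) mod 5).
        c u x = Blue \<and> c u y = Blue \<and> c u z = Blue)"

end

theory Submission
  imports Defs
begin

lemma less5: "(j::nat) < 5 \<longleftrightarrow> j = 0 \<or> j = 1 \<or> j = 2 \<or> j = 3 \<or> j = 4"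
  by auto

lemma ex5: "(\<exists>j<(5::nat). P j) \<longleftrightarrow> P 0 \<or> P 1 \<or> P 2 \<or> P 3 \<or> P 4"
  by (auto simp: less5)

lemma all5: "(\<forall>j<(5::nat). P j) \<longleftrightarrow> P 0 \<and> P 1 \<and> P 2 \<and> P 3 \<and> P 4"
  by (auto simp: less5)

lemma boolfact:
  assumes "r0 \<or> b0" "r1 \<or> b1" "r2 \<or> b2" "r3 \<or> b3" "r4 \<or> b4"
    "\<not> (r0 \<and> r2 \<and> r3)" "\<not> (r1 \<and> r3 \<and> r4)" "\<not> (r2 \<and> r4 \<and> r0)"
    "\<not> (r3 \<and> r0 \<and> r1)" "\<not> (r4 \<and> r1 \<and> r2)"
    "\<not> (b0 \<and> b1 \<and> b2)" "\<not> (b1 \<and> b2 \<and> b3)" "\<not> (b2 \<and> b3 \<and> b4)"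
    "\<not> (b3 \<and> b4 \<and> b0)" "\<not> (b4 \<and> b0 \<and> b1)"
  shows "(\<not> b1 \<and> \<not> b4 \<and> \<not> r2 \<and> \<not> r3) \<or> (\<not> b2 \<and> \<not> b0 \<and> \<not> r3 \<and> \<not> r4)
    \<or> (\<not> b3 \<and> \<not> b1 \<and> \<not> r4 \<and> \<not> r0) \<or> (\<not> b4 \<and> \<not> b2 \<and> \<not> r0 \<and> \<not> r1)
    \<or> (\<not> b0 \<and> \<not> b3 \<and> \<not> r1 \<and> \<not> r2)"
  using assms by (cases r0; cases r1; cases r2; cases r3; cases r4; simp)

lemma modfacts:
  assumes "(i::nat) < 5" "j < 5"
  shows "(j+1) mod 5 = i \<Longrightarrow> j = (i+4) mod 5"
    "(j+2) mod 5 = i \<Longrightarrow> j = (i+3) mod 5"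
    "(i+1) mod 5 \<noteq> i" "(i+2) mod 5 \<noteq> i"
  using assms unfolding less5 by (elim disjE; simp)+

lemma extend:
  assumes pb: "pentagon_blowup c A" and i: "i < 5"
    and nu: "\<forall>j<5. u \<notin> A j"
    and sym: "\<forall>j<5. \<forall>x\<in>A j. c x u = c u x"
    and r1: "\<forall>y\<in>A ((i+1) mod 5). c u y = Red"
    and r4: "\<forall>y\<in>A ((i+4) mod 5). c u y = Red"
    and b2: "\<forall>y\<in>A ((i+2) mod 5). c u y = Blue"
    and b3: "\<forall>y\<in>A ((i+3) mod 5). c u y = Blue"
  shows "pentagon_blowup c (A(i := A i \<union> {u}))"
proof -
  let ?B = "A(i := A i \<union> {u})"
  have mem: "x \<in> ?B j \<Longrightarrow> x \<in> A j \<or> (x = u \<and> j = i)" for x j by (auto split: if_splits)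
  have ne: "\<forall>j<5. ?B j \<noteq> {}" using pb unfolding pentagon_blowup_def by auto
  have dj: "\<forall>j<5. \<forall>k<5. j \<noteq> k \<longrightarrow> ?B j \<inter> ?B k = {}"
    using pb nu i unfolding pentagon_blowup_def by auto
  have red: "\<forall>j<5. \<forall>x\<in>?B j. \<forall>y\<in>?B ((j + 1) mod 5). c x y = Red"
  proof (intro allI impI ballI)
    fix j x y assume j: "j < 5" and x: "x \<in> ?B j" and y: "y \<in> ?B ((j + 1) mod 5)"
    have j1: "(j+1) mod 5 < 5" by simp
    from mem[OF x] mem[OF y] show "c x y = Red"
    proof (elim disjE conjE)
      assume "x \<in> A j" "y \<in> A ((j+1) mod 5)" then show ?thesis using pb j unfolding pentagon_blowup_def by blast
    next
      assume "x \<in> A j" "y = u" "(j+1) mod 5 = i"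
      moreover have "(i+4) mod 5 < 5" by simp
      ultimately show ?thesis using modfacts(1)[OF i j] sym r4 by metis
    next
      assume "x = u" "j = i" "y \<in> A ((j+1) mod 5)" then show ?thesis using r1 by auto
    next
      assume "x = u" "j = i" "y = u" "(j+1) mod 5 = i" then show ?thesis using modfacts(3)[OF i j] by simp
    qed
  qed
  have blue: "\<forall>j<5. \<forall>x\<in>?B j. \<forall>y\<in>?B ((j + 2) mod 5). c x y = Blue"
  proof (intro allI impI ballI)
    fix j x y assume j: "j < 5" and x: "x \<in> ?B j" and y: "y \<in> ?B ((j + 2) mod 5)"
    from mem[OF x] mem[OF y] show "c x y = Blue"
    proof (elim disjE conjE)
      assume "x \<in> A j" "y \<in> A ((j+2) mod 5)" then show ?thesis using pb j unfolding pentagon_blowup_def by blast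
    next
      assume "x \<in> A j" "y = u" "(j+2) mod 5 = i"
      moreover have "(i+3) mod 5 < 5" by simp
      ultimately show ?thesis using modfacts(2)[OF i j] sym b3 by metis
    next
      assume "x = u" "j = i" "y \<in> A ((j+2) mod 5)" then show ?thesis using b2 by auto
    next
      assume "x = u" "j = i" "y = u" "(j+2) mod 5 = i" then show ?thesis using modfacts(4)[OF i j] by simp
    qed
  qed
  show ?thesis unfolding pentagon_blowup_def using ne dj red blue by blast
qed

theorem proposition7p10:
  fixes V :: "'a set" and c :: "'a \<Rightarrow> 'a \<Rightarrow> colour" and A :: "nat \<Rightarrow> 'a set" and u :: 'a
  assumes "red_blue_colouring V c"
    and "u \<in> V"
    and "\<forall>i<5. A i \<subseteq> V - {u}"
    and "pentagon_blowup c A"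
    and "\<not> has_bad_configuration c A u"
  shows "\<exists>i<5. pentagon_blowup c (A(i := A i \<union> {u}))"
proof -
  define r where "r j = (\<exists>x\<in>A j. c u x = Red)" for j
  define b where "b j = (\<exists>x\<in>A j. c u x = Blue)" for j
  have nr: "\<not> r j \<Longrightarrow> \<forall>y\<in>A j. c u y = Blue" for j
    unfolding r_def by (metis colour.exhaust)
  have nb: "\<not> b j \<Longrightarrow> \<forall>y\<in>A j. c u y = Red" for j
    unfolding b_def by (metis colour.exhaust)
  have cov: "r j \<or> b j" if "j < 5" for j
  proof -
    from assms(4) that obtain x where "x \<in> A j" unfolding pentagon_blowup_def by blast
    then show ?thesis unfolding r_def b_def by (metis colour.exhaust)
  qed
  have nu: "\<forall>j<5. u \<notin> A j" using assms(3) by blast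
  have sym: "\<forall>j<5. \<forall>x\<in>A j. c x u = c u x"
  proof (intro allI impI ballI)
    fix j x assume "j < 5" "x \<in> A j"
    then have "x \<in> V" using assms(3) by blast
    then show "c x u = c u x" using assms(1,2) unfolding red_blue_colouring_def by blast
  qed
  have nobad1: "\<not> (r i \<and> r ((i+2) mod 5) \<and> r ((i+3) mod 5))" if i5: "i < 5" for i
  proof
    assume "r i \<and> r ((i+2) mod 5) \<and> r ((i+3) mod 5)"
    then obtain x y z where x: "x \<in> A i" "c u x = Red" and y: "y \<in> A ((i+2) mod 5)" "c u y = Red"
      and z: "z \<in> A ((i+3) mod 5)" "c u z = Red" unfolding r_def by blast
    have "has_bad_configuration c A u" unfolding has_bad_configuration_def
      apply (rule disjI1) using i5 x y z by blast
    then show False using assms(5) by simp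
  qed
  have nobad2: "\<not> (b i \<and> b ((i+1) mod 5) \<and> b ((i+2) mod 5))" if i5: "i < 5" for i
  proof
    assume "b i \<and> b ((i+1) mod 5) \<and> b ((i+2) mod 5)"
    then obtain x y z where x: "x \<in> A i" "c u x = Blue" and y: "y \<in> A ((i+1) mod 5)" "c u y = Blue"
      and z: "z \<in> A ((i+2) mod 5)" "c u z = Blue" unfolding b_def by blast
    have "has_bad_configuration c A u" unfolding has_bad_configuration_def
      apply (rule disjI2) using i5 x y z by blast
    then show False using assms(5) by simp
  qed
  note nobad = nobad1 nobad2
  have mf: "(0+1) mod 5 = (1::nat)" "(1+1) mod 5 = (2::nat)" "(2+1) mod 5 = (3::nat)" "(3+1) mod 5 = (4::nat)" "(4+1) mod 5 = (0::nat)"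
    "(0+2) mod 5 = (2::nat)" "(1+2) mod 5 = (3::nat)" "(2+2) mod 5 = (4::nat)" "(3+2) mod 5 = (0::nat)" "(4+2) mod 5 = (1::nat)"
    "(0+3) mod 5 = (3::nat)" "(1+3) mod 5 = (4::nat)" "(2+3) mod 5 = (0::nat)" "(3+3) mod 5 = (1::nat)" "(4+3) mod 5 = (2::nat)"
    "(0::nat) < 5" "(1::nat) < 5" "(2::nat) < 5" "(3::nat) < 5" "(4::nat) < 5" "True"
    "(0+4) mod 5 = (4::nat)" "(1+4) mod 5 = (0::nat)" "(2+4) mod 5 = (1::nat)" "(3+4) mod 5 = (2::nat)" "(4+4) mod 5 = (3::nat)"
    by simp_all
  have "(\<not> b 1 \<and> \<not> b 4 \<and> \<not> r 2 \<and> \<not> r 3) \<or> (\<not> b 2 \<and> \<not> b 0 \<and> \<not> r 3 \<and> \<not> r 4)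
    \<or> (\<not> b 3 \<and> \<not> b 1 \<and> \<not> r 4 \<and> \<not> r 0) \<or> (\<not> b 4 \<and> \<not> b 2 \<and> \<not> r 0 \<and> \<not> r 1)
    \<or> (\<not> b 0 \<and> \<not> b 3 \<and> \<not> r 1 \<and> \<not> r 2)"
    apply (rule boolfact)
    subgoal using cov[of 0] by simp
    subgoal using cov[of 1] by simp
    subgoal using cov[of 2] by simp
    subgoal using cov[of 3] by simp
    subgoal using cov[of 4] by simp
    subgoal using nobad1[of 0] mf by (simp only: simp_thms)
    subgoal using nobad1[of 1] mf by (simp only: simp_thms)
    subgoal using nobad1[of 2] mf by (simp only: simp_thms)
    subgoal using nobad1[of 3] mf by (simp only: simp_thms)
    subgoal using nobad1[of 4] mf by (simp only: simp_thms)
    subgoal using nobad2[of 0] mf by (simp only: simp_thms)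
    subgoal using nobad2[of 1] mf by (simp only: simp_thms)
    subgoal using nobad2[of 2] mf by (simp only: simp_thms)
    subgoal using nobad2[of 3] mf by (simp only: simp_thms)
    subgoal using nobad2[of 4] mf by (simp only: simp_thms)
    done
  then show ?thesis
  proof (elim disjE)
    assume h: "\<not> b 1 \<and> \<not> b 4 \<and> \<not> r 2 \<and> \<not> r 3"
    have "pentagon_blowup c (A(0 := A 0 \<union> {u}))"
        apply (rule extend[OF assms(4) mf(16) nu sym]) unfolding mf
           apply (metis h nb)
          apply (metis h nb)
         apply (metis h nr)
        apply (metis h nr)
        done
      then show ?thesis using mf(16) by blast
  next
    assume h: "\<not> b 2 \<and> \<not> b 0 \<and> \<not> r 3 \<and> \<not> r 4"
    have "pentagon_blowup c (A(1 := A 1 \<union> {u}))"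
        apply (rule extend[OF assms(4) mf(17) nu sym]) unfolding mf
           apply (metis h nb)
          apply (metis h nb)
         apply (metis h nr)
        apply (metis h nr)
        done
      then show ?thesis using mf(17) by blast
  next
    assume h: "\<not> b 3 \<and> \<not> b 1 \<and> \<not> r 4 \<and> \<not> r 0"
    have "pentagon_blowup c (A(2 := A 2 \<union> {u}))"
        apply (rule extend[OF assms(4) mf(18) nu sym]) unfolding mf
           apply (metis h nb)
          apply (metis h nb)
         apply (metis h nr)
        apply (metis h nr)
        done
      then show ?thesis using mf(18) by blast
  next
    assume h: "\<not> b 4 \<and> \<not> b 2 \<and> \<not> r 0 \<and> \<not> r 1"
    have "pentagon_blowup c (A(3 := A 3 \<union> {u}))"
        apply (rule extend[OF assms(4) mf(19) nu sym]) unfolding mf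
           apply (metis h nb)
          apply (metis h nb)
         apply (metis h nr)
        apply (metis h nr)
        done
      then show ?thesis using mf(19) by blast
  next
    assume h: "\<not> b 0 \<and> \<not> b 3 \<and> \<not> r 1 \<and> \<not> r 2"
    have "pentagon_blowup c (A(4 := A 4 \<union> {u}))"
        apply (rule extend[OF assms(4) mf(20) nu sym]) unfolding mf
           apply (metis h nb)
          apply (metis h nb)
         apply (metis h nr)
        apply (metis h nr)
        done
      then show ?thesis using mf(20) by blast
  qed
qed

end
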